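(* Let $n\ge1$, with notation as in the context. Then in $\mathfrak{gl}(n)$ $$\sum_{k=0}^{n-1}\left(\frac{1}{c_{k0}}f_{k0}(H)^2+2\sum_{l=1}^{k}\frac{1}{c_{kl}}f_{kl}(H)^2T_1(H)\cdots T_l(H)-\frac{2k+1}{n}\right)=-H;$$ equivalently, for every $i=1,\dots,n$, the left side evaluated at $H=\alpha_i$ equals $-\alpha_i$.
   Context: Principal embedding of $\mathfrak{sl}(2)$ in $\mathfrak{gl}(n)$: $Y=\sum_{i=1}^{n-1}E_{i+1,i}$, $H=\sum_{i=1}^n(n-2i+1)E_{ii}$, $X=\sum_{i=1}^{n-1}i(n-i)E_{i,i+1}$. $\alpha_i=n-2i+1$, $T_i(H)=\frac14(n^2-(H+2i-1)^2)$; for a polynomial $f$, $f(H)=\mathrm{diag}(f(\alpha_1),\dots,f(\alpha_n))$ and scalars are scalar matrices. For $0\le l\le k\le n-1$, $f_{kl}$ is the unique polynomial of degree $<n-l$ with $(\mathrm{ad}\,Y)^{k-l}(X^k)=X^lf_{kl}(H)$. $c_{kl}=\dfrac{(k-l)!\,(k!)^2}{(k+l)!\,(2k+1)}\,n(n^2-1^2)\cdots(n^2-k^2)$. *)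

theory Defs
  imports "Jordan_Normal_Form.Matrix" "HOL-Computational_Algebra.Polynomial"
begin

text \<open>Matrices in gl(n) are n x n real matrices (JNF type 'a mat); indices are 0-based,
  so the paper's E_{i,j} (1-based) is the entry (i-1, j-1).\<close>

definition Ymat :: "nat \<Rightarrow> real mat" where
  "Ymat n = mat n n (\<lambda>(r, c). if r = c + 1 then 1 else 0)"

definition Hmat :: "nat \<Rightarrow> real mat" where
  "Hmat n = mat n n (\<lambda>(r, c). if r = c then real n - 2 * real (r + 1) + 1 else 0)"

definition Xmat :: "nat \<Rightarrow> real mat" where
  "Xmat n = mat n n (\<lambda>(r, c). if c = r + 1 then real (r + 1) * real (n - (r + 1)) else 0)"

text \<open>alpha_i for 1-based i\<close>
definition alpha :: "nat \<Rightarrow> nat \<Rightarrow> real" where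
  "alpha n i = real n - 2 * real i + 1"

definition Tpoly :: "nat \<Rightarrow> nat \<Rightarrow> real \<Rightarrow> real" where
  "Tpoly n i h = ((real n)^2 - (h + 2 * real i - 1)^2) / 4"

text \<open>f(H) = diag(f(alpha_1),...,f(alpha_n))\<close>
definition polyH :: "nat \<Rightarrow> real poly \<Rightarrow> real mat" where
  "polyH n p = mat n n (\<lambda>(r, c). if r = c then poly p (alpha n (r + 1)) else 0)"

definition adY :: "nat \<Rightarrow> real mat \<Rightarrow> real mat" where
  "adY n A = Ymat n * A - A * Ymat n"

definition fkl :: "nat \<Rightarrow> nat \<Rightarrow> nat \<Rightarrow> real poly" where
  "fkl n k l = (THE p. degree p < n - l \<and>
       (adY n ^^ (k - l)) (Xmat n ^\<^sub>m k) = Xmat n ^\<^sub>m l * polyH n p)"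

definition ckl :: "nat \<Rightarrow> nat \<Rightarrow> nat \<Rightarrow> real" where
  "ckl n k l = fact (k - l) * (fact k)^2 / (fact (k + l) * (2 * real k + 1))
      * real n * (\<Prod>j=1..k. (real n)^2 - (real j)^2)"

end

theory Submission
  imports Defs "Jordan_Normal_Form.Determinant"
begin

definition xx :: "nat \<Rightarrow> nat \<Rightarrow> real" where
  "xx n r = real (r+1) * real (n - (r+1))"
definition hh :: "nat \<Rightarrow> nat \<Rightarrow> real" where
  "hh n r = real n - 2 * real (r+1) + 1"
definition xp :: "nat \<Rightarrow> nat \<Rightarrow> nat \<Rightarrow> real" where
  "xp n a k = (\<Prod>r\<in>{a..<a+k}. xx n r)"
definition adX :: "nat \<Rightarrow> real mat \<Rightarrow> real mat" where
  "adX n A = Xmat n * A - A * Xmat n"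
definition adH :: "nat \<Rightarrow> real mat \<Rightarrow> real mat" where
  "adH n A = Hmat n * A - A * Hmat n"

lemma carr[simp]: "Ymat n \<in> carrier_mat n n" "Xmat n \<in> carrier_mat n n" "Hmat n \<in> carrier_mat n n"
  by (auto simp: Ymat_def Xmat_def Hmat_def)

lemma mult_carr[simp]: "A \<in> carrier_mat n n \<Longrightarrow> B \<in> carrier_mat n n \<Longrightarrow> A * B \<in> carrier_mat n n"
  by (rule mult_carrier_mat)

lemma ad_carr[simp]: "A \<in> carrier_mat n n \<Longrightarrow> adY n A \<in> carrier_mat n n"
  "A \<in> carrier_mat n n \<Longrightarrow> adX n A \<in> carrier_mat n n"
  "A \<in> carrier_mat n n \<Longrightarrow> adH n A \<in> carrier_mat n n"
  by (auto simp: adY_def adX_def adH_def intro!: minus_carrier_mat mult_carrier_mat)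

lemma ad_dims[simp]: "A \<in> carrier_mat n n \<Longrightarrow> dim_row (adY n A) = n"
  "A \<in> carrier_mat n n \<Longrightarrow> dim_col (adY n A) = n"
  "A \<in> carrier_mat n n \<Longrightarrow> dim_row (adX n A) = n"
  "A \<in> carrier_mat n n \<Longrightarrow> dim_col (adX n A) = n"
  "A \<in> carrier_mat n n \<Longrightarrow> dim_row (adH n A) = n"
  "A \<in> carrier_mat n n \<Longrightarrow> dim_col (adH n A) = n"
  by (metis ad_carr carrier_matD)+

lemma funpow_carr[simp]: "A \<in> carrier_mat n n \<Longrightarrow> (adY n ^^ m) A \<in> carrier_mat n n"
  "A \<in> carrier_mat n n \<Longrightarrow> (adX n ^^ m) A \<in> carrier_mat n n"
  by (induction m) auto

lemma X_ent: "i < n \<Longrightarrow> j < n \<Longrightarrow> Xmat n $$ (i,j) = (if j = i+1 then xx n i else 0)"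
  by (simp add: Xmat_def xx_def)
lemma Y_ent: "i < n \<Longrightarrow> j < n \<Longrightarrow> Ymat n $$ (i,j) = (if i = j+1 then 1 else 0)"
  by (simp add: Ymat_def)
lemma H_ent: "i < n \<Longrightarrow> j < n \<Longrightarrow> Hmat n $$ (i,j) = (if i = j then hh n i else 0)"
  by (simp add: Hmat_def hh_def)

lemma mult_ent: assumes "A \<in> carrier_mat n n" "B \<in> carrier_mat n n" "i < n" "j < n"
  shows "(A * B) $$ (i,j) = (\<Sum>t<n. A $$ (i,t) * B $$ (t,j))"
  using assms by (simp add: scalar_prod_def lessThan_atLeast0)

lemma minus_ent: "A \<in> carrier_mat n n \<Longrightarrow> B \<in> carrier_mat n n \<Longrightarrow> i < n \<Longrightarrow> j < n \<Longrightarrow>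
  (A - B) $$ (i,j) = A $$ (i,j) - B $$ (i,j)" by simp
lemma plus_ent: "A \<in> carrier_mat n n \<Longrightarrow> B \<in> carrier_mat n n \<Longrightarrow> i < n \<Longrightarrow> j < n \<Longrightarrow>
  (A + B) $$ (i,j) = A $$ (i,j) + B $$ (i,j)" by simp
lemma smult_ent: "A \<in> carrier_mat n n \<Longrightarrow> i < n \<Longrightarrow> j < n \<Longrightarrow>
  (c \<cdot>\<^sub>m A) $$ (i,j) = c * A $$ (i,j)" by simp

lemma sum_delta_lt: "(\<Sum>t<(n::nat). if t = c then f t else (0::real)) = (if c < n then f c else 0)"
  by (induction n) auto

lemma Y_mult: assumes A: "A \<in> carrier_mat n n" and i: "i < n" and j: "j < n"
  shows "(Ymat n * A) $$ (i,j) = (if i = 0 then 0 else A $$ (i-1,j))"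
proof -
  have "(Ymat n * A) $$ (i,j) = (\<Sum>t<n. Ymat n $$ (i,t) * A $$ (t,j))"
    by (rule mult_ent) (use A i j in auto)
  also have "\<dots> = (\<Sum>t<n. if t = i - 1 \<and> i \<noteq> 0 then A $$ (t,j) else 0)"
    by (rule sum.cong) (auto simp: Y_ent i j)
  also have "\<dots> = (if i = 0 then 0 else A $$ (i-1,j))" using i by (auto simp: sum.delta)
  finally show ?thesis .
qed

lemma mult_Y: assumes A: "A \<in> carrier_mat n n" and i: "i < n" and j: "j < n"
  shows "(A * Ymat n) $$ (i,j) = (if j + 1 < n then A $$ (i,j+1) else 0)"
proof -
  have "(A * Ymat n) $$ (i,j) = (\<Sum>t<n. A $$ (i,t) * Ymat n $$ (t,j))"
    by (rule mult_ent) (use A i j in auto)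
  also have "\<dots> = (\<Sum>t<n. if t = j + 1 then A $$ (i,t) else 0)"
    by (rule sum.cong) (auto simp: Y_ent i j)
  also have "\<dots> = (if j + 1 < n then A $$ (i,j+1) else 0)" by (simp add: sum_delta_lt)
  finally show ?thesis .
qed

lemma X_mult: assumes A: "A \<in> carrier_mat n n" and i: "i < n" and j: "j < n"
  shows "(Xmat n * A) $$ (i,j) = (if i + 1 < n then xx n i * A $$ (i+1,j) else 0)"
proof -
  have "(Xmat n * A) $$ (i,j) = (\<Sum>t<n. Xmat n $$ (i,t) * A $$ (t,j))"
    by (rule mult_ent) (use A i j in auto)
  also have "\<dots> = (\<Sum>t<n. if t = i + 1 then xx n i * A $$ (t,j) else 0)"
    by (rule sum.cong) (auto simp: X_ent i j)
  also have "\<dots> = (if i + 1 < n then xx n i * A $$ (i+1,j) else 0)" by (simp add: sum_delta_lt)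
  finally show ?thesis .
qed

lemma mult_X: assumes A: "A \<in> carrier_mat n n" and i: "i < n" and j: "j < n"
  shows "(A * Xmat n) $$ (i,j) = (if j = 0 then 0 else A $$ (i,j-1) * xx n (j-1))"
proof -
  have "(A * Xmat n) $$ (i,j) = (\<Sum>t<n. A $$ (i,t) * Xmat n $$ (t,j))"
    by (rule mult_ent) (use A i j in auto)
  also have "\<dots> = (\<Sum>t<n. if t = j - 1 \<and> j \<noteq> 0 then A $$ (i,t) * xx n t else 0)"
    by (rule sum.cong) (auto simp: X_ent i j)
  also have "\<dots> = (if j = 0 then 0 else A $$ (i,j-1) * xx n (j-1))" using j by (auto simp: sum.delta xx_def)
  finally show ?thesis .
qed

lemma H_mult: assumes A: "A \<in> carrier_mat n n" and i: "i < n" and j: "j < n"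
  shows "(Hmat n * A) $$ (i,j) = hh n i * A $$ (i,j)"
proof -
  have "(Hmat n * A) $$ (i,j) = (\<Sum>t<n. Hmat n $$ (i,t) * A $$ (t,j))"
    by (rule mult_ent) (use A i j in auto)
  also have "\<dots> = (\<Sum>t<n. if t = i then hh n i * A $$ (t,j) else 0)"
    by (rule sum.cong) (auto simp: H_ent i j)
  finally show ?thesis using i by (simp add: sum_delta_lt)
qed

lemma mult_H: assumes A: "A \<in> carrier_mat n n" and i: "i < n" and j: "j < n"
  shows "(A * Hmat n) $$ (i,j) = A $$ (i,j) * hh n j"
proof -
  have "(A * Hmat n) $$ (i,j) = (\<Sum>t<n. A $$ (i,t) * Hmat n $$ (t,j))"
    by (rule mult_ent) (use A i j in auto)
  also have "\<dots> = (\<Sum>t<n. if t = j then A $$ (i,t) * hh n j else 0)"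
    by (rule sum.cong) (auto simp: H_ent i j)
  finally show ?thesis using j by (simp add: sum_delta_lt)
qed

lemma adY_entry: assumes A: "A \<in> carrier_mat n n" and i: "i < n" and j: "j < n"
  shows "adY n A $$ (i,j) = (if i = 0 then 0 else A $$ (i-1,j)) - (if j + 1 < n then A $$ (i,j+1) else 0)"
proof -
  have "adY n A $$ (i,j) = (Ymat n * A)$$(i,j) - (A * Ymat n)$$(i,j)"
    unfolding adY_def by (rule minus_ent[of _ n]) (use A i j in auto)
  then show ?thesis using assms by (simp add: Y_mult mult_Y)
qed

lemma adX_entry: assumes A: "A \<in> carrier_mat n n" and i: "i < n" and j: "j < n"
  shows "adX n A $$ (i,j) = (if i + 1 < n then xx n i * A $$ (i+1,j) else 0) - (if j = 0 then 0 else A $$ (i,j-1) * xx n (j-1))"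
proof -
  have "adX n A $$ (i,j) = (Xmat n * A)$$(i,j) - (A * Xmat n)$$(i,j)"
    unfolding adX_def by (rule minus_ent[of _ n]) (use A i j in auto)
  then show ?thesis using assms by (simp add: X_mult mult_X)
qed

lemma adH_entry: assumes A: "A \<in> carrier_mat n n" and i: "i < n" and j: "j < n"
  shows "adH n A $$ (i,j) = (hh n i - hh n j) * A $$ (i,j)"
proof -
  have "adH n A $$ (i,j) = (Hmat n * A)$$(i,j) - (A * Hmat n)$$(i,j)"
    unfolding adH_def by (rule minus_ent[of _ n]) (use A i j in auto)
  then show ?thesis using assms by (simp add: H_mult mult_H algebra_simps)
qed

lemma xx_last: "xx n (n - 1) = 0" by (simp add: xx_def)

lemma xx_diff: assumes "i < n"
  shows "(if i + 1 < n then xx n i else 0) - (if i = 0 then 0 else xx n (i-1)) = hh n i"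
proof (cases "i + 1 < n")
  case True
  then show ?thesis by (cases i) (auto simp: xx_def hh_def of_nat_diff algebra_simps)
next
  case False
  then have "n = i + 1" using assms by auto
  then show ?thesis by (cases i) (auto simp: xx_def hh_def of_nat_diff algebra_simps)
qed

lemma jacobi: assumes A: "A \<in> carrier_mat n n"
  shows "adX n (adY n A) = adY n (adX n A) + adH n A"
proof (rule eq_matI)
  fix i j assume "i < dim_row (adY n (adX n A) + adH n A)" "j < dim_col (adY n (adX n A) + adH n A)"
  hence i: "i < n" and j: "j < n" using A by auto
  have hi: "hh n i = (if i + 1 < n then xx n i else 0) - (if i = 0 then 0 else xx n (i-1))"
    using xx_diff[OF i] by simp
  have hj: "hh n j = (if j + 1 < n then xx n j else 0) - (if j = 0 then 0 else xx n (j-1))"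
    using xx_diff[OF j] by simp
  have h0: "hh n 0 = xx n 0" using i by (simp add: hh_def xx_def of_nat_diff)
  have x0: "\<not> Suc 0 < n \<Longrightarrow> xx n 0 = 0" by (simp add: xx_def)
  have R: "(adY n (adX n A) + adH n A) $$ (i,j) = adY n (adX n A) $$ (i,j) + adH n A $$ (i,j)"
    using A i j by simp
  show "adX n (adY n A) $$ (i, j) = (adY n (adX n A) + adH n A) $$ (i, j)"
    unfolding R using A i j
    by (cases "i+1<n"; cases "j = 0"; cases "i = 0"; cases "j+1<n")
       (simp_all add: adX_entry adY_entry adH_entry hi hj h0 x0 algebra_simps)
qed (use A in auto)

lemma hh_pred: "0 < i \<Longrightarrow> hh n (i - Suc 0) = hh n i + 2" by (simp add: hh_def of_nat_diff)
lemma hh_succ: "hh n (Suc j) = hh n j - 2" by (simp add: hh_def)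
lemma XYH_dims[simp]: "dim_row (Xmat n) = n" "dim_col (Xmat n) = n" "dim_row (Ymat n) = n" "dim_col (Ymat n) = n"
  "dim_row (Hmat n) = n" "dim_col (Hmat n) = n"
  by (auto simp: Xmat_def Ymat_def Hmat_def)

lemma adH_adY: assumes A: "A \<in> carrier_mat n n"
  shows "adH n (adY n A) = adY n (adH n A) - 2 \<cdot>\<^sub>m adY n A"
proof (rule eq_matI)
  fix i j assume "i < dim_row (adY n (adH n A) - 2 \<cdot>\<^sub>m adY n A)" "j < dim_col (adY n (adH n A) - 2 \<cdot>\<^sub>m adY n A)"
  hence i: "i < n" and j: "j < n" using A by auto
  show "adH n (adY n A) $$ (i, j) = (adY n (adH n A) - 2 \<cdot>\<^sub>m adY n A) $$ (i, j)"
    using A i j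
    by (cases "i = 0"; cases "j+1<n")
       (simp_all add: adY_entry adH_entry hh_pred hh_succ algebra_simps)
qed (use A in auto)

lemma adY_smult: assumes A: "A \<in> carrier_mat n n"
  shows "adY n (c \<cdot>\<^sub>m A) = c \<cdot>\<^sub>m adY n A"
  by (rule eq_matI) (use A in \<open>auto simp: adY_entry algebra_simps\<close>)

lemma adX_smult: assumes A: "A \<in> carrier_mat n n"
  shows "adX n (c \<cdot>\<^sub>m A) = c \<cdot>\<^sub>m adX n A"
  by (rule eq_matI) (use A in \<open>auto simp: adX_entry algebra_simps\<close>)

lemma adY_zero: "adY n (0\<^sub>m n n) = 0\<^sub>m n n"
  by (rule eq_matI) (auto simp: adY_entry)

lemma adX_zero: "adX n (0\<^sub>m n n) = 0\<^sub>m n n"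
  by (rule eq_matI) (auto simp: adX_entry)

lemma xp_0[simp]: "xp n i 0 = 1" by (simp add: xp_def)
lemma xp_Suc: "xp n i (Suc k) = xp n i k * xx n (i+k)"
  by (simp add: xp_def)
lemma xp_Suc': "xp n i (Suc k) = xx n i * xp n (Suc i) k"
  unfolding xp_def by (subst prod.atLeast_Suc_lessThan) auto

lemma Xpow_ent: assumes i: "i < n" and j: "j < n"
  shows "(Xmat n ^\<^sub>m k) $$ (i,j) = (if j = i + k then xp n i k else 0)"
  using j
proof (induction k arbitrary: j)
  case 0
  then show ?case using i by (simp add: Xmat_def)
next
  case (Suc k)
  have "(Xmat n ^\<^sub>m Suc k) $$ (i,j) = (Xmat n ^\<^sub>m k * Xmat n) $$ (i,j)" by simp
  also have "\<dots> = (if j = 0 then 0 else (Xmat n ^\<^sub>m k) $$ (i,j-1) * xx n (j-1))"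
    by (rule mult_X) (use i Suc.prems in auto)
  also have "\<dots> = (if j = i + Suc k then xp n i (Suc k) else 0)"
    using Suc.IH[of "j-1"] Suc.prems by (auto simp: xp_Suc)
  finally show ?case .
qed

lemma Ypow_ent: assumes i: "i < n" and j: "j < n"
  shows "(Ymat n ^\<^sub>m k) $$ (i,j) = (if i = j + k then 1 else 0)"
  using j
proof (induction k arbitrary: j)
  case 0
  then show ?case using i by (simp add: Ymat_def)
next
  case (Suc k)
  have "(Ymat n ^\<^sub>m Suc k) $$ (i,j) = (Ymat n ^\<^sub>m k * Ymat n) $$ (i,j)" by simp
  also have "\<dots> = (if j + 1 < n then (Ymat n ^\<^sub>m k) $$ (i,j+1) else 0)"
    by (rule mult_Y) (use i Suc.prems in auto)
  also have "\<dots> = (if i = j + Suc k then 1 else 0)"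
    using Suc.IH[of "j+1"] Suc.prems i by auto
  finally show ?case .
qed

lemma Xpow_carr[simp]: "Xmat n ^\<^sub>m k \<in> carrier_mat n n" by simp
lemma Ypow_carr[simp]: "Ymat n ^\<^sub>m k \<in> carrier_mat n n" by simp

lemma adX_Xpow: "adX n (Xmat n ^\<^sub>m k) = 0\<^sub>m n n"
proof (rule eq_matI)
  fix i j assume "i < dim_row (0\<^sub>m n n :: real mat)" "j < dim_col (0\<^sub>m n n :: real mat)"
  hence i: "i < n" and j: "j < n" by auto
  show "adX n (Xmat n ^\<^sub>m k) $$ (i, j) = 0\<^sub>m n n $$ (i, j)"
    using i j
    by (cases "i+1<n"; cases "j = 0")
       (auto simp: adX_entry Xpow_ent xp_Suc[symmetric] xp_Suc')
qed auto

lemma adH_Xpow: "adH n (Xmat n ^\<^sub>m k) = (2 * real k) \<cdot>\<^sub>m (Xmat n ^\<^sub>m k)"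
proof (rule eq_matI)
  fix i j assume "i < dim_row ((2 * real k) \<cdot>\<^sub>m (Xmat n ^\<^sub>m k))" "j < dim_col ((2 * real k) \<cdot>\<^sub>m (Xmat n ^\<^sub>m k))"
  hence i: "i < n" and j: "j < n" by (auto split: if_splits)
  show "adH n (Xmat n ^\<^sub>m k) $$ (i, j) = ((2 * real k) \<cdot>\<^sub>m (Xmat n ^\<^sub>m k)) $$ (i, j)"
    using i j by (auto simp: adH_entry Xpow_ent hh_def)
qed auto

lemma adY_Ypow: "adY n (Ymat n ^\<^sub>m k) = 0\<^sub>m n n"
  by (rule eq_matI) (auto simp: adY_entry Ypow_ent)

lemma adH_adYpow: "adH n ((adY n ^^ m) (Xmat n ^\<^sub>m k)) = (2 * real k - 2 * real m) \<cdot>\<^sub>m (adY n ^^ m) (Xmat n ^\<^sub>m k)"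
proof (induction m)
  case 0
  then show ?case by (simp add: adH_Xpow)
next
  case (Suc m)
  let ?B = "(adY n ^^ m) (Xmat n ^\<^sub>m k)"
  have B: "?B \<in> carrier_mat n n" by simp
  have "adH n ((adY n ^^ Suc m) (Xmat n ^\<^sub>m k)) = adH n (adY n ?B)" by simp
  also have "\<dots> = adY n (adH n ?B) - 2 \<cdot>\<^sub>m adY n ?B" by (rule adH_adY[OF B])
  also have "\<dots> = (2 * real k - 2 * real m) \<cdot>\<^sub>m adY n ?B - 2 \<cdot>\<^sub>m adY n ?B"
    by (simp add: Suc.IH adY_smult[OF B])
  also have "\<dots> = (2 * real k - 2 * real (Suc m)) \<cdot>\<^sub>m adY n ?B"
    by (rule eq_matI) (auto simp: algebra_simps)
  finally show ?case by simp
qed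

lemma sl2: "adX n ((adY n ^^ Suc m) (Xmat n ^\<^sub>m k)) = (real (Suc m) * (2 * real k - real m)) \<cdot>\<^sub>m (adY n ^^ m) (Xmat n ^\<^sub>m k)"
proof (induction m)
  case 0
  have "adX n (adY n (Xmat n ^\<^sub>m k)) = adY n (adX n (Xmat n ^\<^sub>m k)) + adH n (Xmat n ^\<^sub>m k)"
    by (rule jacobi) simp
  also have "\<dots> = (2 * real k) \<cdot>\<^sub>m (Xmat n ^\<^sub>m k)"
    by (simp add: adX_Xpow adY_zero adH_Xpow)
  finally show ?case by simp
next
  case (Suc m)
  let ?B = "(adY n ^^ Suc m) (Xmat n ^\<^sub>m k)"
  let ?C = "(adY n ^^ m) (Xmat n ^\<^sub>m k)"
  have B: "?B \<in> carrier_mat n n" and C: "?C \<in> carrier_mat n n" by simp_all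
  have "adX n ((adY n ^^ Suc (Suc m)) (Xmat n ^\<^sub>m k)) = adX n (adY n ?B)" by simp
  also have "\<dots> = adY n (adX n ?B) + adH n ?B" by (rule jacobi[OF B])
  also have "\<dots> = (real (Suc m) * (2 * real k - real m)) \<cdot>\<^sub>m adY n ?C + (2 * real k - 2 * real (Suc m)) \<cdot>\<^sub>m ?B"
    by (simp only: Suc.IH adY_smult[OF C] adH_adYpow)
  also have "\<dots> = (real (Suc (Suc m)) * (2 * real k - real (Suc m))) \<cdot>\<^sub>m ?B"
    by (rule eq_matI) (auto simp: algebra_simps)
  finally show ?case .
qed

lemma smult_smult_mat: "A \<in> carrier_mat n n \<Longrightarrow> a \<cdot>\<^sub>m (b \<cdot>\<^sub>m A) = (a * b) \<cdot>\<^sub>m (A :: real mat)"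
  by (rule eq_matI) auto

lemma adX_iter: "(adX n ^^ p) ((adY n ^^ (m + p)) (Xmat n ^\<^sub>m k)) =
   (\<Prod>t\<in>{m+1..m+p}. real t * (2 * real k + 1 - real t)) \<cdot>\<^sub>m (adY n ^^ m) (Xmat n ^\<^sub>m k)"
proof (induction p arbitrary: m)
  case 0
  show ?case by (rule eq_matI) auto
next
  case (Suc p)
  let ?f = "\<lambda>t. real t * (2 * real k + 1 - real t)"
  have C: "(adY n ^^ Suc m) (Xmat n ^\<^sub>m k) \<in> carrier_mat n n" by simp
  have "(adX n ^^ Suc p) ((adY n ^^ (m + Suc p)) (Xmat n ^\<^sub>m k))
      = adX n ((adX n ^^ p) ((adY n ^^ (Suc m + p)) (Xmat n ^\<^sub>m k)))" by simp
  also have "\<dots> = adX n ((\<Prod>t\<in>{Suc m+1..Suc m+p}. ?f t) \<cdot>\<^sub>m (adY n ^^ Suc m) (Xmat n ^\<^sub>m k))"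
    by (simp only: Suc.IH)
  also have "\<dots> = (\<Prod>t\<in>{Suc m+1..Suc m+p}. ?f t) \<cdot>\<^sub>m ((real (Suc m) * (2 * real k - real m)) \<cdot>\<^sub>m (adY n ^^ m) (Xmat n ^\<^sub>m k))"
    by (simp only: adX_smult[OF C] sl2)
  also have "\<dots> = ((\<Prod>t\<in>{Suc m+1..Suc m+p}. ?f t) * ?f (Suc m)) \<cdot>\<^sub>m (adY n ^^ m) (Xmat n ^\<^sub>m k)"
    by (subst smult_smult_mat[of _ n]) (auto simp: algebra_simps)
  also have "(\<Prod>t\<in>{Suc m+1..Suc m+p}. ?f t) * ?f (Suc m) = (\<Prod>t\<in>{m+1..m+Suc p}. ?f t)"
    by (subst (2) prod.atLeast_Suc_atMost) (auto simp: mult.commute)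
  finally show ?case .
qed

lemma adX_iter_zero_mat: "(adX n ^^ q) (0\<^sub>m n n) = 0\<^sub>m n n"
proof (induction q)
  case (Suc q)
  have "(adX n ^^ Suc q) (0\<^sub>m n n) = adX n ((adX n ^^ q) (0\<^sub>m n n))" by (simp only: funpow.simps o_def)
  then show ?case by (simp only: Suc.IH adX_zero)
qed simp

lemma adX_iter_zero: assumes "m < p"
  shows "(adX n ^^ p) ((adY n ^^ m) (Xmat n ^\<^sub>m k)) = 0\<^sub>m n n"
proof -
  define q where "q = p - Suc m"
  have p: "p = q + Suc m" using assms unfolding q_def by simp
  have "(adX n ^^ Suc m) ((adY n ^^ (0 + m)) (Xmat n ^\<^sub>m k)) = adX n ((adX n ^^ m) ((adY n ^^ (0 + m)) (Xmat n ^\<^sub>m k)))"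
    by (simp only: funpow.simps o_def)
  also have "\<dots> = adX n ((\<Prod>t\<in>{0+1..0+m}. real t * (2 * real k + 1 - real t)) \<cdot>\<^sub>m (Xmat n ^\<^sub>m k))"
    by (simp only: adX_iter funpow_0)
  also have "\<dots> = 0\<^sub>m n n" by (subst adX_smult) (auto simp: adX_Xpow)
  finally have "(adX n ^^ Suc m) ((adY n ^^ m) (Xmat n ^\<^sub>m k)) = 0\<^sub>m n n" by (simp only: add_0)
  then show ?thesis unfolding p funpow_add o_def by (simp only: adX_iter_zero_mat)
qed

lemma adY_iter_zero_mat: "(adY n ^^ q) (0\<^sub>m n n) = 0\<^sub>m n n"
proof (induction q)
  case (Suc q)
  have "(adY n ^^ Suc q) (0\<^sub>m n n) = adY n ((adY n ^^ q) (0\<^sub>m n n))" by (simp only: funpow.simps o_def)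
  then show ?case by (simp only: Suc.IH adY_zero)
qed simp

lemma adY_iter_Ypow: "0 < d \<Longrightarrow> (adY n ^^ d) (Ymat n ^\<^sub>m k) = 0\<^sub>m n n"
proof -
  assume "0 < d"
  define q where "q = d - 1"
  have d: "d = q + 1" using \<open>0 < d\<close> unfolding q_def by simp
  have "(adY n ^^ 1) (Ymat n ^\<^sub>m k) = 0\<^sub>m n n" by (simp add: adY_Ypow)
  then show ?thesis unfolding d funpow_add o_def by (simp only: adY_iter_zero_mat)
qed

definition trn :: "nat \<Rightarrow> real mat \<Rightarrow> real" where
  "trn n A = (\<Sum>i<n. A $$ (i,i))"

lemma trn_comm: assumes A: "A \<in> carrier_mat n n" and B: "B \<in> carrier_mat n n"
  shows "trn n (A * B) = trn n (B * A)"
proof -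
  have "trn n (A * B) = (\<Sum>i<n. \<Sum>t<n. A $$ (i,t) * B $$ (t,i))"
    unfolding trn_def by (rule sum.cong) (auto simp: mult_ent[OF A B])
  also have "\<dots> = (\<Sum>t<n. \<Sum>i<n. B $$ (t,i) * A $$ (i,t))"
    by (subst sum.swap) (simp add: mult.commute)
  also have "\<dots> = trn n (B * A)"
    unfolding trn_def by (rule sum.cong) (auto simp: mult_ent[OF B A])
  finally show ?thesis .
qed

lemma trn_minus: "A \<in> carrier_mat n n \<Longrightarrow> B \<in> carrier_mat n n \<Longrightarrow> trn n (A - B) = trn n A - trn n B"
  unfolding trn_def by (simp add: sum_subtractf)

lemma trn_smult: assumes A: "A \<in> carrier_mat n n" shows "trn n (c \<cdot>\<^sub>m A) = c * trn n A"
proof -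
  have "(c \<cdot>\<^sub>m A) $$ (i,i) = c * A $$ (i,i)" if "i < n" for i by (rule smult_ent[OF A that that])
  then show ?thesis unfolding trn_def sum_distrib_left by (intro sum.cong) auto
qed

lemma trn_zero: "B \<in> carrier_mat n n \<Longrightarrow> trn n (0\<^sub>m n n * B) = 0"
  unfolding trn_def by simp

lemma tr_move: assumes Z: "Z \<in> carrier_mat n n" and A: "A \<in> carrier_mat n n" and B: "B \<in> carrier_mat n n"
  shows "trn n ((Z * A - A * Z) * B) = - trn n (A * (Z * B - B * Z))"
proof -
  have "(Z * A - A * Z) * B = Z * (A * B) - A * (Z * B)"
    using Z A B by (simp add: minus_mult_distrib_mat[of _ n n] assoc_mult_mat[of _ n n _ n _ n])
  moreover have "A * (Z * B - B * Z) = A * (Z * B) - A * (B * Z)"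
    by (rule mult_minus_distrib_mat) (use Z A B in auto)
  moreover have "trn n (Z * (A * B)) = trn n ((A * B) * Z)"
    using Z A B by (intro trn_comm) auto
  moreover have "(A * B) * Z = A * (B * Z)" using Z A B by simp
  ultimately show ?thesis using Z A B by (simp add: trn_minus)
qed

lemma tr_adY: "A \<in> carrier_mat n n \<Longrightarrow> B \<in> carrier_mat n n \<Longrightarrow> trn n (adY n A * B) = - trn n (A * adY n B)"
  unfolding adY_def by (rule tr_move) auto
lemma tr_adX: "A \<in> carrier_mat n n \<Longrightarrow> B \<in> carrier_mat n n \<Longrightarrow> trn n (A * adX n B) = - trn n (adX n A * B)"
  unfolding adX_def by (subst tr_move) auto

lemma tr_adY_iter: assumes A: "A \<in> carrier_mat n n" and B: "B \<in> carrier_mat n n"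
  shows "trn n ((adY n ^^ m) A * B) = (-1)^m * trn n (A * (adY n ^^ m) B)"
  using B
proof (induction m arbitrary: B)
  case 0
  then show ?case by simp
next
  case (Suc m)
  have "trn n ((adY n ^^ Suc m) A * B) = trn n (adY n ((adY n ^^ m) A) * B)" by simp
  also have "\<dots> = - trn n ((adY n ^^ m) A * adY n B)"
    by (rule tr_adY) (use A Suc.prems in auto)
  also have "\<dots> = - ((-1)^m * trn n (A * (adY n ^^ m) (adY n B)))"
    using Suc.IH[of "adY n B"] Suc.prems by simp
  also have "(adY n ^^ m) (adY n B) = (adY n ^^ Suc m) B" by (simp add: funpow_Suc_right del: funpow.simps)
  finally show ?case by simp
qed

lemma tr_adX_iter: assumes A: "A \<in> carrier_mat n n" and B: "B \<in> carrier_mat n n"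
  shows "trn n (A * (adX n ^^ p) B) = (-1)^p * trn n ((adX n ^^ p) A * B)"
  using A
proof (induction p arbitrary: A)
  case 0
  then show ?case by simp
next
  case (Suc p)
  have "trn n (A * (adX n ^^ Suc p) B) = trn n (A * adX n ((adX n ^^ p) B))" by simp
  also have "\<dots> = - trn n (adX n A * (adX n ^^ p) B)"
    by (rule tr_adX) (use B Suc.prems in auto)
  also have "\<dots> = - ((-1)^p * trn n ((adX n ^^ p) (adX n A) * B))"
    using Suc.IH[of "adX n A"] Suc.prems by simp
  also have "(adX n ^^ p) (adX n A) = (adX n ^^ Suc p) A" by (simp add: funpow_Suc_right del: funpow.simps)
  finally show ?case by simp
qed

lemma xx_nz: "r + 1 < n \<Longrightarrow> xx n r \<noteq> 0" by (simp add: xx_def)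
lemma xp_nz: "a + k < n \<Longrightarrow> xp n a k \<noteq> 0"
  unfolding xp_def by (auto simp: xx_def)

lemma xp_add: "xp n a (k + l) = xp n a k * xp n (a + k) l"
  by (induction l) (auto simp: xp_Suc add.assoc)

definition phi :: "nat \<Rightarrow> real mat \<Rightarrow> real mat" where
  "phi n A = mat n n (\<lambda>(i,j). xp n 0 j / xp n 0 i * A $$ (j,i))"

lemma phi_carr[simp]: "phi n A \<in> carrier_mat n n" by (simp add: phi_def)
lemma phi_dims[simp]: "dim_row (phi n A) = n" "dim_col (phi n A) = n" by (simp_all add: phi_def)
lemma phi_ent: "i < n \<Longrightarrow> j < n \<Longrightarrow> phi n A $$ (i,j) = xp n 0 j / xp n 0 i * A $$ (j,i)"
  by (simp add: phi_def)

lemma phi_mult: assumes A: "A \<in> carrier_mat n n" and B: "B \<in> carrier_mat n n"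
  shows "phi n (A * B) = phi n B * phi n A"
proof (rule eq_matI)
  fix i j assume "i < dim_row (phi n B * phi n A)" "j < dim_col (phi n B * phi n A)"
  hence i: "i < n" and j: "j < n" by auto
  have "phi n (A * B) $$ (i,j) = xp n 0 j / xp n 0 i * (\<Sum>t<n. A $$ (j,t) * B $$ (t,i))"
    using i j by (simp add: phi_ent mult_ent[OF A B j i])
  also have "\<dots> = (\<Sum>t<n. (xp n 0 t / xp n 0 i * B $$ (t,i)) * (xp n 0 j / xp n 0 t * A $$ (j,t)))"
    unfolding sum_distrib_left
  proof (rule sum.cong)
    fix t assume "t \<in> {..<n}"
    then have "xp n 0 t \<noteq> 0" using xp_nz[of 0 t n] by auto
    then show "xp n 0 j / xp n 0 i * (A $$ (j, t) * B $$ (t, i)) =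
      xp n 0 t / xp n 0 i * B $$ (t, i) * (xp n 0 j / xp n 0 t * A $$ (j, t))"
      by (simp add: field_simps)
  qed simp
  also have "\<dots> = (\<Sum>t<n. phi n B $$ (i,t) * phi n A $$ (t,j))"
    by (rule sum.cong) (use i j in \<open>auto simp: phi_ent\<close>)
  also have "\<dots> = (phi n B * phi n A) $$ (i,j)"
    by (rule mult_ent[symmetric]) (use i j in auto)
  finally show "phi n (A * B) $$ (i,j) = (phi n B * phi n A) $$ (i,j)" .
qed auto

lemma phi_minus: assumes A: "A \<in> carrier_mat n n" and B: "B \<in> carrier_mat n n"
  shows "phi n (A - B) = phi n A - phi n B"
  by (rule eq_matI) (use A B in \<open>auto simp: phi_ent algebra_simps\<close>)

lemma phi_X: "phi n (Xmat n) = Ymat n"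
proof (rule eq_matI)
  fix i j assume "i < dim_row (Ymat n)" "j < dim_col (Ymat n)"
  hence i: "i < n" and j: "j < n" by auto
  show "phi n (Xmat n) $$ (i,j) = Ymat n $$ (i,j)"
  proof (cases "i = j + 1")
    case True
    have "xp n 0 (j+1) = xp n 0 j * xx n j" using xp_Suc[of n 0 j] by simp
    moreover have "xp n 0 j \<noteq> 0" "xx n j \<noteq> 0" using True i xp_nz[of 0 j n] xx_nz[of j n] by auto
    ultimately show ?thesis using i j True by (simp add: phi_ent X_ent Y_ent)
  next
    case False
    then show ?thesis using i j by (simp add: phi_ent X_ent Y_ent)
  qed
qed auto

lemma phi_Y: "phi n (Ymat n) = Xmat n"
proof (rule eq_matI)
  fix i j assume "i < dim_row (Xmat n)" "j < dim_col (Xmat n)"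
  hence i: "i < n" and j: "j < n" by auto
  show "phi n (Ymat n) $$ (i,j) = Xmat n $$ (i,j)"
  proof (cases "j = i + 1")
    case True
    have "xp n 0 (i+1) = xp n 0 i * xx n i" using xp_Suc[of n 0 i] by simp
    moreover have "xp n 0 i \<noteq> 0" using True j xp_nz[of 0 i n] by auto
    ultimately show ?thesis using i j True by (simp add: phi_ent X_ent Y_ent)
  next
    case False
    then show ?thesis using i j by (simp add: phi_ent X_ent Y_ent)
  qed
qed auto

lemma phi_Xpow: "phi n (Xmat n ^\<^sub>m k) = Ymat n ^\<^sub>m k"
proof (rule eq_matI)
  fix i j assume "i < dim_row (Ymat n ^\<^sub>m k)" "j < dim_col (Ymat n ^\<^sub>m k)"
  hence i: "i < n" and j: "j < n" by (auto split: if_splits)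
  show "phi n (Xmat n ^\<^sub>m k) $$ (i,j) = (Ymat n ^\<^sub>m k) $$ (i,j)"
  proof (cases "i = j + k")
    case True
    have "xp n 0 (j+k) = xp n 0 j * xp n j k" using xp_add[of n 0 j k] by simp
    moreover have "xp n 0 (j+k) \<noteq> 0" using True i xp_nz[of 0 "j+k" n] by auto
    ultimately show ?thesis using i j True by (simp add: phi_ent Xpow_ent Ypow_ent)
  next
    case False
    then show ?thesis using i j by (simp add: phi_ent Xpow_ent Ypow_ent)
  qed
qed auto

lemma phi_adY: assumes A: "A \<in> carrier_mat n n"
  shows "phi n (adY n A) = (-1) \<cdot>\<^sub>m adX n (phi n A)"
proof -
  have "phi n (adY n A) = phi n A * Xmat n - Xmat n * phi n A"
    unfolding adY_def using A by (simp add: phi_minus phi_mult phi_X phi_Y)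
  also have "\<dots> = (-1) \<cdot>\<^sub>m adX n (phi n A)"
    by (rule eq_matI) (auto simp: adX_def)
  finally show ?thesis .
qed

lemma phi_iter: "phi n ((adY n ^^ m) (Xmat n ^\<^sub>m k)) = (-1)^m \<cdot>\<^sub>m (adX n ^^ m) (Ymat n ^\<^sub>m k)"
proof (induction m)
  case 0
  show ?case by (simp add: phi_Xpow) (rule eq_matI, auto)
next
  case (Suc m)
  have C: "(adX n ^^ m) (Ymat n ^\<^sub>m k) \<in> carrier_mat n n" by simp
  have "phi n ((adY n ^^ Suc m) (Xmat n ^\<^sub>m k)) = phi n (adY n ((adY n ^^ m) (Xmat n ^\<^sub>m k)))" by simp
  also have "\<dots> = (-1) \<cdot>\<^sub>m adX n ((-1)^m \<cdot>\<^sub>m (adX n ^^ m) (Ymat n ^\<^sub>m k))"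
    by (subst phi_adY) (auto simp: Suc.IH)
  also have "\<dots> = (-1)^Suc m \<cdot>\<^sub>m (adX n ^^ Suc m) (Ymat n ^\<^sub>m k)"
    by (subst adX_smult[OF C]) (subst smult_smult_mat[of _ n], auto)
  finally show ?case .
qed

lemma band: assumes "i < n" "j < n" "(adY n ^^ m) (Xmat n ^\<^sub>m k) $$ (i,j) \<noteq> 0"
  shows "j + m = i + k"
  using assms
proof (induction m arbitrary: i j)
  case 0
  then show ?case by (simp add: Xpow_ent split: if_splits)
next
  case (Suc m)
  have C: "(adY n ^^ m) (Xmat n ^\<^sub>m k) \<in> carrier_mat n n" by simp
  have "adY n ((adY n ^^ m) (Xmat n ^\<^sub>m k)) $$ (i,j) \<noteq> 0" using Suc.prems by simp
  then have "(i \<noteq> 0 \<and> (adY n ^^ m) (Xmat n ^\<^sub>m k) $$ (i-1,j) \<noteq> 0) \<or>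
             (j + 1 < n \<and> (adY n ^^ m) (Xmat n ^\<^sub>m k) $$ (i,j+1) \<noteq> 0)"
    using Suc.prems by (auto simp: adY_entry[OF C] split: if_splits)
  then show ?case
  proof
    assume "i \<noteq> 0 \<and> (adY n ^^ m) (Xmat n ^\<^sub>m k) $$ (i-1,j) \<noteq> 0"
    then show ?thesis using Suc.IH[of "i-1" j] Suc.prems by auto
  next
    assume "j + 1 < n \<and> (adY n ^^ m) (Xmat n ^\<^sub>m k) $$ (i,j+1) \<noteq> 0"
    then show ?thesis using Suc.IH[of i "j+1"] Suc.prems by auto
  qed
qed

definition Mk :: "nat \<Rightarrow> nat \<Rightarrow> nat \<Rightarrow> real mat" where
  "Mk n l k = (adY n ^^ (k - l)) (Xmat n ^\<^sub>m k)"

definition Pkl :: "nat \<Rightarrow> nat \<Rightarrow> real" where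
  "Pkl k l = (\<Prod>t\<in>{1..k-l}. real t * (2 * real k + 1 - real t))"

definition trX :: "nat \<Rightarrow> nat \<Rightarrow> real" where
  "trX n k = (\<Sum>a<n-k. xp n a k)"

lemma Mk_carr[simp]: "Mk n l k \<in> carrier_mat n n" by (simp add: Mk_def)

lemma Mk_band: assumes "l \<le> k" "i < n" "j < n" "Mk n l k $$ (i,j) \<noteq> 0" shows "j = i + l"
  using band[of i n j "k-l" k] assms unfolding Mk_def by auto

lemma sum_if_lt: "(N::nat) \<le> n \<Longrightarrow> (\<Sum>i<n. if i < N then f i else (0::real)) = (\<Sum>i<N. f i)"
proof -
  assume "N \<le> n"
  then have "{x\<in>{..<n}. x < N} = {..<N}" by auto
  then show ?thesis by (simp add: sum.inter_filter[symmetric])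
qed

lemma trace_side: assumes lk: "l \<le> k" and lk': "l \<le> k'"
  shows "trn n (Mk n l k * phi n (Mk n l k')) = (\<Sum>a<n-l. Mk n l k $$ (a,a+l) * Mk n l k' $$ (a,a+l) / xp n a l)"
proof -
  have "trn n (Mk n l k * phi n (Mk n l k')) = (\<Sum>i<n. \<Sum>t<n. Mk n l k $$ (i,t) * phi n (Mk n l k') $$ (t,i))"
    unfolding trn_def by (rule sum.cong) (auto simp: mult_ent[of _ n])
  also have "\<dots> = (\<Sum>i<n. if i < n - l then Mk n l k $$ (i,i+l) * Mk n l k' $$ (i,i+l) / xp n i l else 0)"
  proof (rule sum.cong)
    fix i assume "i \<in> {..<n}"
    then have i: "i < n" by simp
    have "(\<Sum>t<n. Mk n l k $$ (i,t) * phi n (Mk n l k') $$ (t,i)) =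
          (\<Sum>t<n. if t = i + l then Mk n l k $$ (i,t) * phi n (Mk n l k') $$ (t,i) else 0)"
      by (rule sum.cong) (use Mk_band[OF lk i] in auto)
    also have "\<dots> = (if i + l < n then Mk n l k $$ (i,i+l) * phi n (Mk n l k') $$ (i+l,i) else 0)"
      by (rule sum_delta_lt)
    also have "\<dots> = (if i < n - l then Mk n l k $$ (i,i+l) * Mk n l k' $$ (i,i+l) / xp n i l else 0)"
    proof (cases "i + l < n")
      case True
      have "xp n 0 (i+l) = xp n 0 i * xp n i l" using xp_add[of n 0 i l] by simp
      moreover have "xp n 0 i \<noteq> 0" "xp n i l \<noteq> 0" using True xp_nz[of 0 i n] xp_nz[of i l n] by auto
      ultimately show ?thesis using True i by (simp add: phi_ent field_simps)
    qed auto
    finally show "(\<Sum>t<n. Mk n l k $$ (i,t) * phi n (Mk n l k') $$ (t,i)) = \<dots>" .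
  qed simp
  also have "\<dots> = (\<Sum>a<n-l. Mk n l k $$ (a,a+l) * Mk n l k' $$ (a,a+l) / xp n a l)"
    by (rule sum_if_lt) simp
  finally show ?thesis .
qed

lemma trXY: "trn n (Xmat n ^\<^sub>m k * Ymat n ^\<^sub>m k) = trX n k"
proof -
  have "trn n (Xmat n ^\<^sub>m k * Ymat n ^\<^sub>m k) = (\<Sum>i<n. \<Sum>t<n. (Xmat n ^\<^sub>m k) $$ (i,t) * (Ymat n ^\<^sub>m k) $$ (t,i))"
    unfolding trn_def by (rule sum.cong[OF refl], rule mult_ent) auto
  also have "\<dots> = (\<Sum>i<n. if i < n - k then xp n i k else 0)"
  proof (rule sum.cong)
    fix i assume "i \<in> {..<n}"
    then have i: "i < n" by simp
    have "(\<Sum>t<n. (Xmat n ^\<^sub>m k) $$ (i,t) * (Ymat n ^\<^sub>m k) $$ (t,i)) = (\<Sum>t<n. if t = i + k then xp n i k else 0)"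
      by (rule sum.cong) (auto simp: Xpow_ent Ypow_ent i)
    also have "\<dots> = (if i < n - k then xp n i k else 0)" by (subst sum_delta_lt) auto
    finally show "(\<Sum>t<n. (Xmat n ^\<^sub>m k) $$ (i,t) * (Ymat n ^\<^sub>m k) $$ (t,i)) = \<dots>" .
  qed simp
  also have "\<dots> = trX n k" unfolding trX_def by (rule sum_if_lt) simp
  finally show ?thesis .
qed

lemma trn_right_zero: "A \<in> carrier_mat n n \<Longrightarrow> trn n (A * 0\<^sub>m n n) = 0"
  unfolding trn_def by simp

lemma trace_alg: assumes lk: "l \<le> k" and lk': "l \<le> k'"
  shows "trn n (Mk n l k * phi n (Mk n l k')) = (if k = k' then Pkl k l * trX n k else 0)"
proof -
  let ?p = "k' - l"
  have "trn n (Mk n l k * phi n (Mk n l k')) = trn n (Mk n l k * ((-1)^?p \<cdot>\<^sub>m (adX n ^^ ?p) (Ymat n ^\<^sub>m k')))"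
    unfolding Mk_def[of n l k'] by (simp only: phi_iter)
  also have "\<dots> = (-1)^?p * trn n (Mk n l k * (adX n ^^ ?p) (Ymat n ^\<^sub>m k'))"
    by (subst mult_smult_distrib[OF Mk_carr funpow_carr(2)[OF Ypow_carr]]) (auto simp: trn_smult)
  also have "\<dots> = (-1)^?p * ((-1)^?p * trn n ((adX n ^^ ?p) (Mk n l k) * Ymat n ^\<^sub>m k'))"
    by (subst tr_adX_iter) auto
  also have "\<dots> = trn n ((adX n ^^ ?p) (Mk n l k) * Ymat n ^\<^sub>m k')"
    by (simp add: power_mult_distrib[symmetric])
  also have "\<dots> = (if k = k' then Pkl k l * trX n k else 0)"
  proof (cases "k < k'")
    case True
    then have "(adX n ^^ ?p) (Mk n l k) = 0\<^sub>m n n" unfolding Mk_def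
      by (intro adX_iter_zero) (use lk in auto)
    then show ?thesis using True by (simp add: trn_zero trn_def)
  next
    case False
    let ?d = "k - k'"
    have km: "k - l = ?d + ?p" using False lk lk' by auto
    have "(adX n ^^ ?p) (Mk n l k) = (\<Prod>t\<in>{?d+1..?d+?p}. real t * (2 * real k + 1 - real t)) \<cdot>\<^sub>m (adY n ^^ ?d) (Xmat n ^\<^sub>m k)"
      unfolding Mk_def km by (rule adX_iter)
    then have "trn n ((adX n ^^ ?p) (Mk n l k) * Ymat n ^\<^sub>m k') =
       (\<Prod>t\<in>{?d+1..?d+?p}. real t * (2 * real k + 1 - real t)) * trn n ((adY n ^^ ?d) (Xmat n ^\<^sub>m k) * Ymat n ^\<^sub>m k')"
    proof -
      let ?D = "(adY n ^^ ?d) (Xmat n ^\<^sub>m k)"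
      have S: "(c \<cdot>\<^sub>m ?D) * Ymat n ^\<^sub>m k' = c \<cdot>\<^sub>m (?D * Ymat n ^\<^sub>m k')" for c
        by (rule mult_smult_assoc_mat[of _ n n _ n]) auto
      have T: "trn n (c \<cdot>\<^sub>m (?D * Ymat n ^\<^sub>m k')) = c * trn n (?D * Ymat n ^\<^sub>m k')" for c
        by (rule trn_smult) auto
      show "(adX n ^^ ?p) (Mk n l k) = (\<Prod>t\<in>{?d+1..?d+?p}. real t * (2 * real k + 1 - real t)) \<cdot>\<^sub>m ?D \<Longrightarrow> ?thesis"
        by (simp only: S T)
    qed
    also have "trn n ((adY n ^^ ?d) (Xmat n ^\<^sub>m k) * Ymat n ^\<^sub>m k') = (-1)^?d * trn n (Xmat n ^\<^sub>m k * (adY n ^^ ?d) (Ymat n ^\<^sub>m k'))"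
      by (rule tr_adY_iter) auto
    finally have E: "trn n ((adX n ^^ ?p) (Mk n l k) * Ymat n ^\<^sub>m k') =
       (\<Prod>t\<in>{?d+1..?d+?p}. real t * (2 * real k + 1 - real t)) * ((-1)^?d * trn n (Xmat n ^\<^sub>m k * (adY n ^^ ?d) (Ymat n ^\<^sub>m k')))" .
    show ?thesis
    proof (cases "k = k'")
      case True
      then show ?thesis using E by (simp add: trXY Pkl_def)
    next
      case ne: False
      then have "0 < ?d" using False by auto
      then show ?thesis using E ne by (simp add: adY_iter_Ypow trn_right_zero trn_def)
    qed
  qed
  finally show ?thesis .
qed

lemma orth: assumes lk: "l \<le> k" and lk': "l \<le> k'"
  shows "(\<Sum>a<n-l. Mk n l k $$ (a,a+l) * Mk n l k' $$ (a,a+l) / xp n a l) = (if k = k' then Pkl k l * trX n k else 0)"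
  using trace_side[OF lk lk', of n] trace_alg[OF lk lk', of n] by simp

lemma binom_conv: "(\<Sum>a\<le>m. ((a+p) choose p) * ((m-a+q) choose q)) = (m+p+q+1) choose m"
proof (induction m arbitrary: q)
  case 0
  then show ?case by simp
next
  case (Suc m)
  note outer = Suc.IH
  show ?case
  proof (induction q)
    case 0
    have "(\<Sum>a\<le>Suc m. ((a+p) choose p) * ((Suc m - a + 0) choose 0)) = (\<Sum>a\<le>Suc m. (p+a) choose a)"
      by (rule sum.cong) (auto simp: binomial_symmetric[of p "a+p" for a] add.commute)
    also have "\<dots> = Suc (p + Suc m) choose Suc m" by (rule sum_choose_lower)
    finally show ?case by (simp add: add.commute add.left_commute)
  next
    case (Suc q)
    have eq: "((Suc m - a + Suc q) choose Suc q) = ((Suc m - a + q) choose q) + (if a \<le> m then ((m - a + Suc q) choose Suc q) else 0)"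
      if "a \<le> Suc m" for a
    proof (cases "a \<le> m")
      case True
      then have "Suc m - a + Suc q = Suc (Suc m - a + q)" by simp
      moreover have "Suc m - a + q = m - a + Suc q" using True by simp
      ultimately show ?thesis using True by simp
    next
      case False
      then have "a = Suc m" using that by simp
      then show ?thesis by simp
    qed
    have "(\<Sum>a\<le>Suc m. ((a+p) choose p) * ((Suc m - a + Suc q) choose Suc q))
        = (\<Sum>a\<le>Suc m. ((a+p) choose p) * ((Suc m - a + q) choose q)) + (\<Sum>a\<le>Suc m. if a \<le> m then ((a+p) choose p) * ((m - a + Suc q) choose Suc q) else 0)"
    proof (subst sum.distrib[symmetric], rule sum.cong)
      fix a assume "a \<in> {..Suc m}"
      then have a: "a \<le> Suc m" by simp
      show "((a+p) choose p) * ((Suc m - a + Suc q) choose Suc q) =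
        ((a+p) choose p) * ((Suc m - a + q) choose q) + (if a \<le> m then ((a+p) choose p) * ((m - a + Suc q) choose Suc q) else 0)"
        unfolding eq[OF a] by (simp add: algebra_simps)
    qed simp
    also have "(\<Sum>a\<le>Suc m. if a \<le> m then ((a+p) choose p) * ((m - a + Suc q) choose Suc q) else 0)
        = (\<Sum>a\<le>m. ((a+p) choose p) * ((m - a + Suc q) choose Suc q))"
      by (simp add: atMost_Suc)
    also have "\<dots> = (m + p + Suc q + 1) choose m" by (rule outer)
    also have "(\<Sum>a\<le>Suc m. ((a+p) choose p) * ((Suc m - a + q) choose q)) = (Suc m + p + q + 1) choose Suc m"
      by (rule Suc.IH)
    finally show ?case by simp
  qed
qed

lemma alg1: "(B::real) \<noteq> 0 \<Longrightarrow> E \<noteq> 0 \<Longrightarrow> y \<noteq> 0 \<Longrightarrow> D = y * E \<Longrightarrow> A' = A * x \<Longrightarrow>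
   A / B * (C / D) * (x * y) = A' / B * (C / E)"
  by (simp add: field_simps)

lemma xp_fact: "a + k < n \<Longrightarrow> xp n a k = fact (a+k) / fact a * (fact (n-1-a) / fact (n-1-a-k))"
proof (induction k)
  case 0
  then show ?case by simp
next
  case (Suc k)
  have f1: "(fact (a + Suc k) :: real) = fact (a+k) * real (a + k + 1)" by (simp add: algebra_simps)
  have e: "n-1-a-k - 1 = n-1-a-Suc k" by simp
  have f2: "(fact (n-1-a-k) :: real) = real (n-1-a-k) * fact (n-1-a-Suc k)"
    by (subst fact_reduce) (use Suc.prems e in auto)
  have xx: "xx n (a+k) = real (a+k+1) * real (n-1-a-k)" by (simp add: xx_def)
  have nz: "real (n-1-a-k) \<noteq> 0" using Suc.prems by simp
  have "xp n a (Suc k) = xp n a k * (real (a+k+1) * real (n-1-a-k))" by (simp only: xp_Suc xx)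
  also have "\<dots> = fact (a+k) / fact a * (fact (n-1-a) / fact (n-1-a-k)) * (real (a+k+1) * real (n-1-a-k))"
    using Suc by simp
  also have "\<dots> = fact (a + Suc k) / fact a * (fact (n-1-a) / fact (n-1-a-Suc k))"
    by (rule alg1[OF _ _ nz f2 f1]) auto
  finally show ?case .
qed

lemma alg2: "(fk::real) \<noteq> 0 \<Longrightarrow> B \<noteq> 0 \<Longrightarrow> D \<noteq> 0 \<Longrightarrow> A / B * (C / D) = fk^2 * ((A / (fk * B)) * (C / (fk * D)))"
  by (simp add: field_simps power2_eq_square)

lemma alg3: "(F2::real) \<noteq> 0 \<Longrightarrow> Fkl \<noteq> 0 \<Longrightarrow> c \<noteq> 0 \<Longrightarrow>
  a * s / (Fkl * c) * nn * P = (a * F2 / Fkl) * (s * (nn * P / (c * F2)))"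
  by (simp add: field_simps)

lemma trX_binom: assumes "k < n" shows "trX n k = (fact k)^2 * real ((n+k) choose (2*k+1))"
proof -
  let ?m = "n - 1 - k"
  have "trX n k = (\<Sum>a\<le>?m. xp n a k)"
    unfolding trX_def by (rule sum.cong) (use assms in auto)
  also have "\<dots> = (\<Sum>a\<le>?m. (fact k)^2 * real (((a+k) choose k) * ((?m - a + k) choose k)))"
  proof (rule sum.cong)
    fix a assume "a \<in> {..?m}"
    then have a: "a \<le> ?m" by simp
    have e: "?m - a + k = n-1-a" using a assms by simp
    have "real ((a+k) choose k) = fact (a+k) / (fact k * fact a)" by (subst binomial_fact) auto
    moreover have "real ((n-1-a) choose k) = fact (n-1-a) / (fact k * fact (n-1-a-k))"
      by (subst binomial_fact) (use a assms in auto)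
    ultimately show "xp n a k = (fact k)^2 * real (((a+k) choose k) * ((?m - a + k) choose k))"
      using a assms by (simp only: xp_fact e of_nat_mult) (rule alg2, auto)
  qed simp
  also have "\<dots> = (fact k)^2 * real (\<Sum>a\<le>?m. ((a+k) choose k) * ((?m - a + k) choose k))"
    by (simp add: sum_distrib_left)
  also have "(\<Sum>a\<le>?m. ((a+k) choose k) * ((?m - a + k) choose k)) = (?m + k + k + 1) choose ?m"
    by (rule binom_conv)
  also have "(?m + k + k + 1) choose ?m = (n+k) choose (2*k+1)"
  proof -
    have "?m + k + k + 1 = n + k" using assms by simp
    moreover have "(n+k) choose ?m = (n+k) choose (n + k - ?m)" by (rule binomial_symmetric) simp
    moreover have "n + k - ?m = 2*k+1" using assms by simp
    ultimately show ?thesis by (simp add: mult_2)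
  qed
  finally show ?thesis .
qed

lemma alg4: "(E::real) \<noteq> 0 \<Longrightarrow> y \<noteq> 0 \<Longrightarrow> D = y * E \<Longrightarrow> A' = A * x \<Longrightarrow> A' / E = A / D * (x * y)"
  by (simp add: field_simps)

lemma fact_ratio: "k < n \<Longrightarrow> (fact (n+k) :: real) / fact (n-k-1) = real n * (\<Prod>j\<in>{1..k}. (real n)^2 - (real j)^2)"
proof (induction k)
  case 0
  then have "n = Suc (n - 1)" by simp
  then have "(fact n :: real) = real n * fact (n-1)" by (metis fact_Suc of_nat_Suc)
  then show ?case by simp
next
  case (Suc k)
  have e1: "(fact (n + Suc k) :: real) = fact (n+k) * real (n+k+1)" by simp
  have e: "n-k-1 - 1 = n - Suc k - 1" by simp
  have e2: "(fact (n-k-1) :: real) = real (n-k-1) * fact (n - Suc k - 1)"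
    by (subst fact_reduce) (use Suc.prems e in auto)
  have nz: "(fact (n - Suc k - 1) :: real) \<noteq> 0" by simp
  have r: "real (n-k-1) = real n - real k - 1" using Suc.prems by (simp add: of_nat_diff)
  have nz2: "real (n-k-1) \<noteq> 0" using Suc.prems by simp
  have "(fact (n + Suc k) :: real) / fact (n - Suc k - 1) = fact (n+k) / fact (n-k-1) * (real (n+k+1) * real (n-k-1))"
    by (rule alg4[OF nz nz2 e2 e1])
  also have "\<dots> = real n * (\<Prod>j\<in>{1..k}. (real n)^2 - (real j)^2) * ((real n)^2 - (real (Suc k))^2)"
    using Suc by (simp add: r algebra_simps power2_eq_square)
  also have "\<dots> = real n * (\<Prod>j\<in>{1..Suc k}. (real n)^2 - (real j)^2)"
    by (simp add: prod.nat_ivl_Suc')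
  finally show ?case .
qed

lemma Pkl_gen: "d \<le> 2*k \<Longrightarrow> (\<Prod>t\<in>{1..d}. real t * (2 * real k + 1 - real t)) * fact (2*k - d) = fact d * fact (2*k)"
proof (induction d)
  case 0
  then show ?case by simp
next
  case (Suc d)
  let ?P = "(\<Prod>t\<in>{1..d}. real t * (2 * real k + 1 - real t))"
  have e: "2*k - d - 1 = 2*k - Suc d" by simp
  have f: "(fact (2*k-d) :: real) = real (2*k-d) * fact (2*k - Suc d)"
    by (subst fact_reduce) (use Suc.prems e in auto)
  have dk: "d \<le> 2*k" using Suc.prems by simp
  have r0: "real (2*k-d) = 2 * real k - real d" using dk by (simp add: of_nat_diff)
  have r: "2 * real k + 1 - real (Suc d) = real (2*k-d)" using r0 by simp
  have "(\<Prod>t\<in>{1..Suc d}. real t * (2 * real k + 1 - real t)) = ?P * (real (Suc d) * real (2*k-d))"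
    by (simp only: prod.nat_ivl_Suc' r) simp
  then have "(\<Prod>t\<in>{1..Suc d}. real t * (2 * real k + 1 - real t)) * fact (2*k - Suc d)
      = real (Suc d) * (?P * (real (2*k-d) * fact (2*k - Suc d)))" by simp
  also have "\<dots> = real (Suc d) * (?P * fact (2*k - d))" by (simp only: f)
  also have "\<dots> = fact (Suc d) * fact (2*k)" using Suc dk by simp
  finally show ?case .
qed

lemma Pkl_fact: "l \<le> k \<Longrightarrow> Pkl k l * fact (k+l) = fact (k-l) * fact (2*k)"
proof -
  assume lk: "l \<le> k"
  have "2*k - (k-l) = k + l" using lk by simp
  moreover have "k - l \<le> 2*k" by simp
  ultimately show ?thesis using Pkl_gen[of "k-l" k] unfolding Pkl_def by simp
qed

lemma ckl_eq: assumes "l \<le> k" "k < n" shows "ckl n k l = Pkl k l * trX n k"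
proof -
  have "real ((n+k) choose (2*k+1)) = fact (n+k) / (fact (2*k+1) * fact (n+k - (2*k+1)))"
    by (rule binomial_fact) (use assms in simp)
  moreover have "n+k - (2*k+1) = n-k-1" by simp
  ultimately have b0: "real ((n+k) choose (2*k+1)) = fact (n+k) / (fact (n-k-1) * fact (2*k+1))"
    by (simp add: mult.commute)
  have fr: "(fact (n+k) :: real) = fact (n-k-1) * (real n * (\<Prod>j\<in>{1..k}. (real n)^2 - (real j)^2))"
    using fact_ratio[OF assms(2)] by (simp add: divide_eq_eq mult.commute)
  have b: "real ((n+k) choose (2*k+1)) = real n * (\<Prod>j\<in>{1..k}. (real n)^2 - (real j)^2) / fact (2*k+1)"
    unfolding b0 fr by simp
  have P: "Pkl k l = fact (k-l) * fact (2*k) / fact (k+l)"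
    using Pkl_fact[OF assms(1)] by (simp add: field_simps)
  have f: "(fact (2*k+1) :: real) = (2 * real k + 1) * fact (2*k)" by simp
  show ?thesis unfolding ckl_def trX_binom[OF assms(2)] b P f
    by (rule alg3) (use assms in auto)
qed

lemma ckl_nz: assumes "l \<le> k" "k < n" shows "ckl n k l \<noteq> 0"
proof -
  have "(real n)^2 - (real j)^2 \<noteq> 0" if "j \<in> {1..k}" for j
  proof -
    have "real j < real n" using that assms by simp
    moreover have "0 \<le> real j" by simp
    ultimately have "(real j)^2 < (real n)^2" by (rule power_strict_mono) simp
    then show ?thesis using \<open>real j < real n\<close> by simp
  qed
  then have "(\<Prod>j\<in>{1..k}. (real n)^2 - (real j)^2) \<noteq> 0" by simp
  moreover have "real n \<noteq> 0" using assms by simp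
  ultimately show ?thesis unfolding ckl_def by simp
qed

lemma complete:
  fixes v :: "nat \<Rightarrow> nat \<Rightarrow> real" and c d :: "nat \<Rightarrow> real"
  assumes c: "\<And>r. r < N \<Longrightarrow> c r \<noteq> 0"
    and orth: "\<And>r r'. r < N \<Longrightarrow> r' < N \<Longrightarrow> (\<Sum>a<N. v r a * v r' a * d a) = (if r = r' then c r else 0)"
    and a: "a < N"
  shows "d a * (\<Sum>r<N. (v r a)^2 / c r) = 1"
proof -
  define V where "V = mat N N (\<lambda>(r,a). v r a)"
  define W where "W = mat N N (\<lambda>(a,r). v r a * d a / c r)"
  have V: "V \<in> carrier_mat N N" and W: "W \<in> carrier_mat N N" by (auto simp: V_def W_def)
  have "V * W = 1\<^sub>m N"
  proof (rule eq_matI)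
    fix r r' assume "r < dim_row (1\<^sub>m N :: real mat)" "r' < dim_col (1\<^sub>m N :: real mat)"
    then have r: "r < N" and r': "r' < N" by auto
    have "(V * W) $$ (r,r') = (\<Sum>a<N. v r a * (v r' a * d a / c r'))"
      using r r' by (simp add: V_def W_def scalar_prod_def lessThan_atLeast0)
    also have "\<dots> = (\<Sum>a<N. v r a * v r' a * d a) / c r'"
      by (simp add: sum_divide_distrib algebra_simps)
    also have "\<dots> = 1\<^sub>m N $$ (r,r')" using r r' orth[OF r r'] c[OF r'] by simp
    finally show "(V * W) $$ (r,r') = 1\<^sub>m N $$ (r,r')" .
  qed (auto simp: V_def W_def)
  then have WV: "W * V = 1\<^sub>m N" by (rule mat_mult_left_right_inverse[OF V W])
  have "(W * V) $$ (a,a) = (\<Sum>r<N. v r a * d a / c r * v r a)"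
    using a by (simp add: V_def W_def scalar_prod_def lessThan_atLeast0)
  also have "\<dots> = d a * (\<Sum>r<N. (v r a)^2 / c r)"
    by (simp add: sum_distrib_left power2_eq_square algebra_simps)
  finally show ?thesis using WV a by simp
qed

lemma interp:
  fixes z y :: "nat \<Rightarrow> real"
  assumes "inj_on z {..N}"
  shows "\<exists>p. degree p \<le> N \<and> (\<forall>a\<le>N. poly p (z a) = y a)"
  using assms
proof (induction N)
  case 0
  show ?case by (rule exI[of _ "[:y 0:]"]) auto
next
  case (Suc N)
  then obtain p where p: "degree p \<le> N" "\<forall>a\<le>N. poly p (z a) = y a"
    by (meson atMost_subset_iff inj_on_subset le_SucI order_refl)
  define q where "q = (\<Prod>b\<le>N. [:- z b, 1:])"
  have polyq: "poly q x = (\<Prod>b\<le>N. x - z b)" for x unfolding q_def by (simp add: poly_prod)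
  have dq: "degree q \<le> Suc N"
  proof -
    have "degree q \<le> sum (degree \<circ> (\<lambda>b. [:- z b, 1:])) {..N}" unfolding q_def by (rule degree_prod_sum_le) simp
    also have "\<dots> = Suc N" by simp
    finally show ?thesis .
  qed
  have qnz: "poly q (z (Suc N)) \<noteq> 0"
  proof -
    have "z (Suc N) - z b \<noteq> 0" if "b \<le> N" for b
    proof
      assume "z (Suc N) - z b = 0"
      then have "z (Suc N) = z b" by simp
      with Suc.prems that have "Suc N = b" by (auto dest: inj_onD)
      with that show False by simp
    qed
    then show ?thesis unfolding polyq by simp
  qed
  define c where "c = (y (Suc N) - poly p (z (Suc N))) / poly q (z (Suc N))"
  define p' where "p' = p + smult c q"
  have "degree p' \<le> Suc N"
    unfolding p'_def using p(1) dq degree_add_le[of p "Suc N" "smult c q"] degree_smult_le[of c q] by linarith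
  moreover have "\<forall>a\<le>Suc N. poly p' (z a) = y a"
  proof (intro allI impI)
    fix a assume a: "a \<le> Suc N"
    show "poly p' (z a) = y a"
    proof (cases "a = Suc N")
      case True
      then show ?thesis using qnz unfolding p'_def c_def by (simp add: field_simps)
    next
      case False
      then have aN: "a \<le> N" using a by simp
      then have "poly q (z a) = 0" unfolding polyq by (intro prod_zero) (use aN in auto)
      then show ?thesis using p(2) aN unfolding p'_def by simp
    qed
  qed
  ultimately show ?case by blast
qed

lemma polyH_ent: "i < n \<Longrightarrow> j < n \<Longrightarrow> polyH n p $$ (i,j) = (if i = j then poly p (alpha n (j+1)) else 0)"
  by (simp add: polyH_def)

lemma polyH_carr[simp]: "polyH n p \<in> carrier_mat n n" by (simp add: polyH_def)

lemma XH_ent: assumes i: "i < n" and j: "j < n"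
  shows "(Xmat n ^\<^sub>m l * polyH n p) $$ (i,j) = (if j = i + l then xp n i l * poly p (alpha n (j+1)) else 0)"
proof -
  have "(Xmat n ^\<^sub>m l * polyH n p) $$ (i,j) = (\<Sum>t<n. (Xmat n ^\<^sub>m l) $$ (i,t) * polyH n p $$ (t,j))"
    by (rule mult_ent) (use i j in auto)
  also have "\<dots> = (\<Sum>t<n. if t = j then (Xmat n ^\<^sub>m l) $$ (i,t) * poly p (alpha n (j+1)) else 0)"
    by (rule sum.cong) (auto simp: polyH_ent j)
  also have "\<dots> = (Xmat n ^\<^sub>m l) $$ (i,j) * poly p (alpha n (j+1))" using j by (simp add: sum_delta_lt)
  finally show ?thesis using i j by (simp add: Xpow_ent)
qed

lemma alpha_inj: "inj_on (\<lambda>a. alpha n (a + l + 1)) A"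
  by (rule inj_onI) (simp add: alpha_def)

lemma fkl_char: assumes lk: "l \<le> k" and kn: "k < n"
  shows "degree (fkl n k l) < n - l \<and> Mk n l k = Xmat n ^\<^sub>m l * polyH n (fkl n k l)"
proof -
  let ?P = "\<lambda>p. degree p < n - l \<and> (adY n ^^ (k - l)) (Xmat n ^\<^sub>m k) = Xmat n ^\<^sub>m l * polyH n p"
  have P_iff: "?P p \<longleftrightarrow> degree p < n - l \<and> (\<forall>a<n-l. poly p (alpha n (a+l+1)) = Mk n l k $$ (a,a+l) / xp n a l)" for p
  proof
    assume H: "?P p"
    have "poly p (alpha n (a+l+1)) = Mk n l k $$ (a,a+l) / xp n a l" if a: "a < n - l" for a
    proof -
      have "Mk n l k $$ (a,a+l) = (Xmat n ^\<^sub>m l * polyH n p) $$ (a,a+l)" using H unfolding Mk_def by simp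
      also have "\<dots> = xp n a l * poly p (alpha n (a+l+1))" using a by (subst XH_ent) auto
      finally show ?thesis using xp_nz[of a l n] a by (simp add: field_simps)
    qed
    then show "degree p < n - l \<and> (\<forall>a<n-l. poly p (alpha n (a+l+1)) = Mk n l k $$ (a,a+l) / xp n a l)"
      using H by auto
  next
    assume H: "degree p < n - l \<and> (\<forall>a<n-l. poly p (alpha n (a+l+1)) = Mk n l k $$ (a,a+l) / xp n a l)"
    have "Mk n l k = Xmat n ^\<^sub>m l * polyH n p"
    proof (rule eq_matI)
      fix i j assume "i < dim_row (Xmat n ^\<^sub>m l * polyH n p)" "j < dim_col (Xmat n ^\<^sub>m l * polyH n p)"
      then have i: "i < n" and j: "j < n" by (auto simp: polyH_def)
      show "Mk n l k $$ (i,j) = (Xmat n ^\<^sub>m l * polyH n p) $$ (i,j)"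
      proof (cases "j = i + l")
        case True
        then have a: "i < n - l" using j by simp
        have "xp n i l \<noteq> 0" using xp_nz[of i l n] True j by simp
        then show ?thesis using H a True i j by (simp add: XH_ent add.assoc)
      next
        case False
        then have "Mk n l k $$ (i,j) = 0" using Mk_band[OF lk i j] by auto
        then show ?thesis using False i j by (simp add: XH_ent)
      qed
    qed (auto simp: polyH_def carrier_matD[OF Mk_carr])
    then show "?P p" using H unfolding Mk_def by simp
  qed
  have ex: "\<exists>p. ?P p"
  proof -
    obtain N where N: "n - l = Suc N" using lk kn by (metis Suc_diff_Suc le_less_trans)
    have "inj_on (\<lambda>a. alpha n (a + l + 1)) {..N}" by (rule alpha_inj)
    from interp[OF this, of "\<lambda>a. Mk n l k $$ (a,a+l) / xp n a l"]
    obtain p where "degree p \<le> N" "\<forall>a\<le>N. poly p (alpha n (a + l + 1)) = Mk n l k $$ (a,a+l) / xp n a l"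
      by blast
    then have "?P p" by (intro P_iff[THEN iffD2]) (auto simp: N less_Suc_eq_le)
    then show ?thesis by blast
  qed
  have uniq: "p = q" if "?P p" "?P q" for p q
  proof -
    let ?A = "(\<lambda>a. alpha n (a + l + 1)) ` {..<n-l}"
    have cardA: "card ?A = n - l" using card_image[OF alpha_inj[of n l "{..<n-l}"]] by simp
    show ?thesis
    proof (rule poly_eqI_degree[of ?A])
      fix x assume "x \<in> ?A"
      then obtain a where "a < n - l" "x = alpha n (a + l + 1)" by auto
      then show "poly p x = poly q x" using P_iff[THEN iffD1, OF that(1)] P_iff[THEN iffD1, OF that(2)] by auto
    qed (use that cardA in auto)
  qed
  have "?P (THE p. ?P p)" by (rule theI'[of ?P]) (use ex uniq in blast)
  then show ?thesis unfolding fkl_def Mk_def by simp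
qed

lemma fkl_val: assumes lk: "l \<le> k" and kn: "k < n" and a: "a < n - l"
  shows "poly (fkl n k l) (alpha n (a+l+1)) = Mk n l k $$ (a,a+l) / xp n a l"
proof -
  have "Mk n l k $$ (a,a+l) = (Xmat n ^\<^sub>m l * polyH n (fkl n k l)) $$ (a,a+l)" using fkl_char[OF lk kn] by simp
  also have "\<dots> = xp n a l * poly (fkl n k l) (alpha n (a+l+1))" using a by (subst XH_ent) auto
  finally show ?thesis using xp_nz[of a l n] a by (simp add: field_simps)
qed

lemma Tpoly_alpha: assumes "j \<le> i" "i \<le> n"
  shows "Tpoly n j (alpha n i) = real (i - j) * real (n - i + j)"
proof -
  have a: "real (i - j) = real i - real j" using assms by (simp add: of_nat_diff)
  have b: "real (n - i + j) = real n - real i + real j" using assms by (simp add: of_nat_diff)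
  have "(real n)^2 - (real n - 2 * real i + 1 + 2 * real j - 1)^2 = 4 * ((real i - real j) * (real n - real i + real j))"
    by (simp add: power2_eq_square algebra_simps)
  then show ?thesis unfolding Tpoly_def alpha_def a b by simp
qed

lemma Tprod_pos: assumes "i \<le> n" "l < i"
  shows "(\<Prod>j\<in>{1..l}. Tpoly n j (alpha n i)) = xp n (i-l-1) l"
  using assms(2)
proof (induction l)
  case 0
  then show ?case by simp
next
  case (Suc l)
  have "(\<Prod>j\<in>{1..Suc l}. Tpoly n j (alpha n i)) = xp n (i-l-1) l * Tpoly n (Suc l) (alpha n i)"
    using Suc by (simp add: prod.nat_ivl_Suc')
  also have "Tpoly n (Suc l) (alpha n i) = real (i - Suc l) * real (n - i + Suc l)"
    using Suc.prems assms by (intro Tpoly_alpha) auto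
  also have "xp n (i - Suc l - 1) (Suc l) = xx n (i - Suc l - 1) * xp n (Suc (i - Suc l - 1)) l" by (rule xp_Suc')
  moreover have "Suc (i - Suc l - 1) = i - l - 1" using Suc.prems by simp
  moreover have "xx n (i - Suc l - 1) = real (i - Suc l) * real (n - i + Suc l)"
    using Suc.prems assms unfolding xx_def by (simp add: Suc_diff_Suc)
  ultimately show ?case by (simp add: mult.commute)
qed

lemma Tprod_zero: assumes "1 \<le> i" "i \<le> n" "i \<le> l"
  shows "(\<Prod>j\<in>{1..l}. Tpoly n j (alpha n i)) = 0"
proof -
  have "Tpoly n i (alpha n i) = 0" using Tpoly_alpha[of i i n] assms by simp
  then show ?thesis using assms by (intro prod_zero[of "{1..l}"]) auto
qed

lemma complete_app: assumes ln: "l < n" and a: "a < n - l"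
  shows "(\<Sum>k\<in>{l..<n}. (Mk n l k $$ (a,a+l))^2 / ckl n k l) = xp n a l"
proof -
  let ?v = "\<lambda>r a. Mk n l (l+r) $$ (a,a+l)"
  let ?d = "\<lambda>a. 1 / xp n a l"
  let ?c = "\<lambda>r. ckl n (l+r) l"
  have "?d a * (\<Sum>r<n-l. (?v r a)^2 / ?c r) = 1"
  proof (rule complete[where v = ?v and d = ?d and c = ?c])
    fix r assume "r < n - l" then show "?c r \<noteq> 0" by (intro ckl_nz) auto
  next
    fix r r' assume r: "r < n - l" and r': "r' < n - l"
    have "(\<Sum>a<n-l. ?v r a * ?v r' a * ?d a) = (\<Sum>a<n-l. Mk n l (l+r) $$ (a,a+l) * Mk n l (l+r') $$ (a,a+l) / xp n a l)"
      by simp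
    also have "\<dots> = (if l + r = l + r' then Pkl (l+r) l * trX n (l+r) else 0)" by (rule orth) auto
    also have "\<dots> = (if r = r' then ?c r else 0)" using r by (simp add: ckl_eq)
    finally show "(\<Sum>a<n-l. ?v r a * ?v r' a * ?d a) = (if r = r' then ?c r else 0)" .
  qed (rule a)
  moreover have "xp n a l \<noteq> 0" using xp_nz[of a l n] a by simp
  ultimately have "(\<Sum>r<n-l. (?v r a)^2 / ?c r) = xp n a l" by (simp add: field_simps)
  moreover have "(\<Sum>r<n-l. (?v r a)^2 / ?c r) = (\<Sum>k\<in>{l..<n}. (Mk n l k $$ (a,a+l))^2 / ckl n k l)"
  proof -
    have "(\<Sum>k\<in>{0+l..<(n-l)+l}. (Mk n l k $$ (a,a+l))^2 / ckl n k l) = (\<Sum>r\<in>{0..<n-l}. (?v r a)^2 / ?c r)"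
      by (subst sum.shift_bounds_nat_ivl) (simp add: add.commute)
    then show ?thesis using ln by (simp add: lessThan_atLeast0)
  qed
  ultimately show ?thesis by simp
qed

lemma sum_odd: "(\<Sum>k<n. 2 * real k + 1) = (real n)^2"
  by (induction n) (auto simp: power2_eq_square algebra_simps)

theorem proposition8p3p2:
  fixes n :: nat
  assumes "n \<ge> 1"
  shows "\<forall>i\<in>{1..n}.
    (\<Sum>k=0..n-1.
        (1 / ckl n k 0) * (poly (fkl n k 0) (alpha n i))^2
      + 2 * (\<Sum>l=1..k. (1 / ckl n k l) * (poly (fkl n k l) (alpha n i))^2
                         * (\<Prod>j=1..l. Tpoly n j (alpha n i)))
      - (2 * real k + 1) / real n)
    = - alpha n i"
proof
  fix i assume "i \<in> {1..n}"
  then have i1: "1 \<le> i" and iN: "i \<le> n" by auto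
  define g where "g k l = (1 / ckl n k l) * (poly (fkl n k l) (alpha n i))^2 * (\<Prod>j=1..l. Tpoly n j (alpha n i))" for k l
  have g_pos: "g k l = (Mk n l k $$ (i-l-1, i-1))^2 / ckl n k l / xp n (i-l-1) l"
    if lk: "l \<le> k" and kn: "k < n" and li: "l < i" for k l
  proof -
    have a: "i - l - 1 < n - l" using li iN by simp
    have e: "i - l - 1 + l + 1 = i" "i - l - 1 + l = i - 1" using li by auto
    have pv: "poly (fkl n k l) (alpha n i) = Mk n l k $$ (i-l-1, i-1) / xp n (i-l-1) l"
      using fkl_val[OF lk kn a] e by simp
    have tp: "(\<Prod>j=1..l. Tpoly n j (alpha n i)) = xp n (i-l-1) l" by (rule Tprod_pos[OF iN li])
    have nz: "xp n (i-l-1) l \<noteq> 0" using xp_nz[of "i-l-1" l n] a by simp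
    show ?thesis unfolding g_def pv tp using nz by (simp add: power2_eq_square field_simps)
  qed
  have g_zero: "g k l = 0" if "i \<le> l" for k l
    unfolding g_def using Tprod_zero[OF i1 iN that] by simp
  have col: "(\<Sum>k\<in>{l..<n}. g k l) = (if l < i then 1 else 0)" for l
  proof (cases "l < i")
    case True
    then have ln: "l < n" using iN by simp
    have a: "i - l - 1 < n - l" using True iN by simp
    have e: "i - l - 1 + l = i - 1" using True by simp
    have nz: "xp n (i-l-1) l \<noteq> 0" using xp_nz[of "i-l-1" l n] a by simp
    have "(\<Sum>k\<in>{l..<n}. g k l) = (\<Sum>k\<in>{l..<n}. (Mk n l k $$ (i-l-1, i-1))^2 / ckl n k l) / xp n (i-l-1) l"
      unfolding sum_divide_distrib by (rule sum.cong) (use True in \<open>auto simp: g_pos\<close>)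
    also have "(\<Sum>k\<in>{l..<n}. (Mk n l k $$ (i-l-1, i-1))^2 / ckl n k l) = xp n (i-l-1) l"
      using complete_app[OF ln a] e by simp
    finally show ?thesis using nz True by simp
  next
    case False
    then show ?thesis using g_zero by simp
  qed
  have summand: "(1 / ckl n k 0) * (poly (fkl n k 0) (alpha n i))^2
      + 2 * (\<Sum>l=1..k. (1 / ckl n k l) * (poly (fkl n k l) (alpha n i))^2
                         * (\<Prod>j=1..l. Tpoly n j (alpha n i)))
      - (2 * real k + 1) / real n = g k 0 + 2 * (\<Sum>l=1..k. g k l) - (2 * real k + 1) / real n" for k
    unfolding g_def by simp
  have ivl: "{0..n-1} = {0..<n}" using assms by auto
  have S1: "(\<Sum>k=0..n-1. g k 0) = 1"
    using col[of 0] i1 ivl by simp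
  have S2: "(\<Sum>k=0..n-1. \<Sum>l=1..k. g k l) = real (i - 1)"
  proof -
    have "(\<Sum>k=0..n-1. \<Sum>l=1..k. g k l) = (\<Sum>k\<in>{0..n-1}. \<Sum>l\<in>{l. l \<in> {1..n-1} \<and> l \<le> k}. g k l)"
      by (rule sum.cong) (auto intro!: sum.cong)
    also have "\<dots> = (\<Sum>l\<in>{1..n-1}. \<Sum>k\<in>{k. k \<in> {0..n-1} \<and> l \<le> k}. g k l)"
      by (rule sum.swap_restrict) auto
    also have "\<dots> = (\<Sum>l\<in>{1..n-1}. \<Sum>k\<in>{l..<n}. g k l)"
      by (rule sum.cong) (use assms in \<open>auto intro!: sum.cong\<close>)
    also have "\<dots> = (\<Sum>l\<in>{1..n-1}. if l < i then 1 else 0)" by (simp add: col)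
    also have "\<dots> = (\<Sum>l\<in>{l\<in>{1..n-1}. l < i}. 1)" by (rule sum.inter_filter[symmetric]) simp
    also have "{l\<in>{1..n-1}. l < i} = {1..<i}" using iN by auto
    finally show ?thesis by simp
  qed
  have S3: "(\<Sum>k=0..n-1. (2 * real k + 1) / real n) = real n"
  proof -
    have "(\<Sum>k=0..n-1. (2 * real k + 1) / real n) = (\<Sum>k<n. 2 * real k + 1) / real n"
      unfolding ivl sum_divide_distrib by (simp add: lessThan_atLeast0)
    also have "\<dots> = real n" using assms by (simp add: sum_odd power2_eq_square)
    finally show ?thesis .
  qed
  have "(\<Sum>k=0..n-1. (1 / ckl n k 0) * (poly (fkl n k 0) (alpha n i))^2
      + 2 * (\<Sum>l=1..k. (1 / ckl n k l) * (poly (fkl n k l) (alpha n i))^2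
                         * (\<Prod>j=1..l. Tpoly n j (alpha n i)))
      - (2 * real k + 1) / real n)
      = (\<Sum>k=0..n-1. g k 0) + 2 * (\<Sum>k=0..n-1. \<Sum>l=1..k. g k l) - (\<Sum>k=0..n-1. (2 * real k + 1) / real n)"
    unfolding summand by (simp add: sum.distrib sum_subtractf sum_distrib_left)
  also have "\<dots> = - alpha n i"
    unfolding S1 S2 S3 alpha_def using i1 by (simp add: of_nat_diff)
  finally show "(\<Sum>k=0..n-1. (1 / ckl n k 0) * (poly (fkl n k 0) (alpha n i))^2
      + 2 * (\<Sum>l=1..k. (1 / ckl n k l) * (poly (fkl n k l) (alpha n i))^2
                         * (\<Prod>j=1..l. Tpoly n j (alpha n i)))
      - (2 * real k + 1) / real n) = - alpha n i" .
qed

end
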